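(* Let $G=(V,E)$ be a finite simple graph and $T\geq1$ an integer. For each zero forcing set $C$ that is the initial set of a zero forcing game in $\mathcal{Z}(G,T)$, there is a feasible solution $(x,y,z)$ of the Time Step Model $\mathrm{TSM}(G,T)$ such that $|C|=\sum_{v\in V}x^0_v$ and $\sum_{t\in[T]}z^t=\mathrm{pt}(G,C)\leq T$.
   Context: Zero forcing: $n=|V|$, $N(u)$ is the neighborhood of $u$, $d(u)=|N(u)|$. Under the standard color change rule, a filled vertex $u$ can force a non-filled vertex $v$ if $v$ is the only non-filled neighbor of $u$. A zero forcing game on $G$ with initial set $C\subseteq V$ consists of sets $C^{(0)}=C^{[0]}=C$, sets $C^{(t)}$ (vertices forced at step $t$) with $C^{[t]}=C^{[t-1]}\cup C^{(t)}$, and a collection $\phi(C)$ of forces $u\to v$, such that every vertex lies in exactly one $C^{(t)}$, and each $v\in C^{(t)}$, $t\geq1$, is forced by exactly one neighbor $u$ such that $u$ and all neighbors of $u$ other than $v$ lie in $C^{[t-1]}$. $C$ is a zero forcing set if repeated forcing eventually fills all of $V$. The propagation time $\mathrm{pt}(G,C)$ is the smallest $t^*$ with $C^{[t^*]}=V$ when at each step all possible forces are applied simultaneously, i.e. $C^{(t)}$ is the set of all $v\notin C^{[t-1]}$ for which some $u\in C^{[t-1]}$ has $v$ as its unique neighbor outside $C^{[t-1]}$ ($\mathrm{pt}(G,C)=\infty$ if $C$ is not a zero forcing set). Here $\mathcal{Z}(G,T)$ denotes the family of zero forcing games on $G$ whose initial set is a zero forcing set, which use at most $T$ time steps, and in which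 at each time step all possible forces are applied. Time Step Model: $A$ is the set of arcs containing $(u,v)$ and $(v,u)$ for each edge $\{u,v\}$, $[T]=\{1,\dots,T\}$. $\mathrm{TSM}(G,T)$ has binary variables $x^t_v$ ($v\in V$, $t\in\{0,\dots,T\}$), $y^t_a$ ($a\in A$, $t\in[T]$), $z^t$ ($t\in[T]$), with constraints: (1) $x^0_v+\sum_{t\in[T]}\sum_{a=(u,v)\in A}y^t_a=1$ for all $v$; (2) $y^t_a\leq x^{t-1}_u$ for all $a=(u,v)\in A$, $t\in[T]$; (3) $y^t_a\leq x^{t-1}_w$ for all $a=(u,v)\in A$, $w\in N(u)\setminus\{v\}$, $t\in[T]$; (4) $x^t_v=x^{t-1}_v+\sum_{a=(u,v)\in A}y^t_a$ for all $v$, $t\in[T]$; (5) $x^{t-1}_u-x^{t-1}_v+\sum_{w\in N(u)\setminus\{v\}}x^{t-1}_w\leq\sum_{a=(w,v)\in A}y^t_a+d(u)-1$ for all $(u,v)\in A$, $t\in[T]$; (6) $\frac1n\sum_{v\in V}(x^t_v-x^{t-1}_v)-z^t\leq0$ for all $t\in[T]$; (7) $z^t-\sum_{v\in V}(x^t_v-x^{t-1}_v)\leq 0$ for all $t\in[T]$. A feasible solution is one satisfying all constraints. *)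

theory Defs
  imports Complex_Main "HOL-Library.Extended_Nat"
begin

definition simple_graph :: "'a set \<Rightarrow> ('a \<Rightarrow> 'a \<Rightarrow> bool) \<Rightarrow> bool" where
  "simple_graph V E \<longleftrightarrow> finite V \<and> (\<forall>u v. E u v \<longrightarrow> E v u) \<and> (\<forall>u. \<not> E u u)
     \<and> (\<forall>u v. E u v \<longrightarrow> u \<in> V \<and> v \<in> V)"

definition nbh :: "'a set \<Rightarrow> ('a \<Rightarrow> 'a \<Rightarrow> bool) \<Rightarrow> 'a \<Rightarrow> 'a set" where
  "nbh V E u = {w \<in> V. E u w}"

definition deg :: "'a set \<Rightarrow> ('a \<Rightarrow> 'a \<Rightarrow> bool) \<Rightarrow> 'a \<Rightarrow> nat" where
  "deg V E u = card (nbh V E u)"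

definition arcs :: "'a set \<Rightarrow> ('a \<Rightarrow> 'a \<Rightarrow> bool) \<Rightarrow> ('a \<times> 'a) set" where
  "arcs V E = {(u, v). u \<in> V \<and> v \<in> V \<and> E u v}"

definition force_step :: "'a set \<Rightarrow> ('a \<Rightarrow> 'a \<Rightarrow> bool) \<Rightarrow> 'a set \<Rightarrow> 'a set" where
  "force_step V E S = S \<union> {v \<in> V - S. \<exists>u \<in> S. E u v \<and> (\<forall>w \<in> nbh V E u - {v}. w \<in> S)}"

definition filled :: "'a set \<Rightarrow> ('a \<Rightarrow> 'a \<Rightarrow> bool) \<Rightarrow> 'a set \<Rightarrow> nat \<Rightarrow> 'a set" where
  "filled V E C t = (force_step V E ^^ t) C"

definition zero_forcing_set :: "'a set \<Rightarrow> ('a \<Rightarrow> 'a \<Rightarrow> bool) \<Rightarrow> 'a set \<Rightarrow> bool" where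
  "zero_forcing_set V E C \<longleftrightarrow> C \<subseteq> V \<and> (\<exists>t. filled V E C t = V)"

definition prop_time :: "'a set \<Rightarrow> ('a \<Rightarrow> 'a \<Rightarrow> bool) \<Rightarrow> 'a set \<Rightarrow> enat" where
  "prop_time V E C =
     (if zero_forcing_set V E C then enat (LEAST t. filled V E C t = V) else \<infinity>)"

definition TSM_feasible ::
  "'a set \<Rightarrow> ('a \<Rightarrow> 'a \<Rightarrow> bool) \<Rightarrow> nat \<Rightarrow>
   ('a \<Rightarrow> nat \<Rightarrow> real) \<Rightarrow> ('a \<times> 'a \<Rightarrow> nat \<Rightarrow> real) \<Rightarrow> (nat \<Rightarrow> real) \<Rightarrow> bool" where
  "TSM_feasible V E T x y z \<longleftrightarrow>
     (\<forall>v \<in> V. \<forall>t \<in> {0..T}. x v t \<in> {0, 1}) \<and>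
     (\<forall>a \<in> arcs V E. \<forall>t \<in> {1..T}. y a t \<in> {0, 1}) \<and>
     (\<forall>t \<in> {1..T}. z t \<in> {0, 1}) \<and>
     \<comment> \<open>(1)\<close>
     (\<forall>v \<in> V. x v 0 + (\<Sum>t \<in> {1..T}. \<Sum>u \<in> {u. (u, v) \<in> arcs V E}. y (u, v) t) = 1) \<and>
     \<comment> \<open>(2)\<close>
     (\<forall>(u, v) \<in> arcs V E. \<forall>t \<in> {1..T}. y (u, v) t \<le> x u (t - 1)) \<and>
     \<comment> \<open>(3)\<close>
     (\<forall>(u, v) \<in> arcs V E. \<forall>w \<in> nbh V E u - {v}. \<forall>t \<in> {1..T}. y (u, v) t \<le> x w (t - 1)) \<and>
     \<comment> \<open>(4)\<close>
     (\<forall>v \<in> V. \<forall>t \<in> {1..T}.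
        x v t = x v (t - 1) + (\<Sum>u \<in> {u. (u, v) \<in> arcs V E}. y (u, v) t)) \<and>
     \<comment> \<open>(5)\<close>
     (\<forall>(u, v) \<in> arcs V E. \<forall>t \<in> {1..T}.
        x u (t - 1) - x v (t - 1) + (\<Sum>w \<in> nbh V E u - {v}. x w (t - 1))
          \<le> (\<Sum>w \<in> {w. (w, v) \<in> arcs V E}. y (w, v) t) + real (deg V E u) - 1) \<and>
     \<comment> \<open>(6)\<close>
     (\<forall>t \<in> {1..T}. (1 / real (card V)) * (\<Sum>v \<in> V. x v t - x v (t - 1)) - z t \<le> 0) \<and>
     \<comment> \<open>(7)\<close>
     (\<forall>t \<in> {1..T}. z t - (\<Sum>v \<in> V. x v t - x v (t - 1)) \<le> 0)"

end

theory Submission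
  imports Defs
begin

lemma filled_0: "filled V E C 0 = C" by (simp add: filled_def)
lemma filled_Suc: "filled V E C (Suc t) = force_step V E (filled V E C t)"
  by (simp add: filled_def)
lemma filled_step: "filled V E C t \<subseteq> filled V E C (Suc t)"
  by (auto simp: filled_Suc force_step_def)
lemma filled_mono: "t \<le> t' \<Longrightarrow> filled V E C t \<subseteq> filled V E C t'"
  using lift_Suc_mono_le[of "filled V E C", OF filled_step] by blast
lemma filled_sub: "C \<subseteq> V \<Longrightarrow> filled V E C t \<subseteq> V"
  by (induction t) (auto simp: filled_0 filled_Suc force_step_def)
lemma filled_C: "C \<subseteq> filled V E C t"
  using filled_mono[of 0 t V E C] by (simp add: filled_0)
lemma filled_new: "v \<in> filled V E C (Suc t) - filled V E C t \<Longrightarrow>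
  \<exists>u\<in>filled V E C t. E u v \<and> (\<forall>w\<in>nbh V E u - {v}. w \<in> filled V E C t)"
  by (auto simp: filled_Suc force_step_def)
lemma filled_fix: "filled V E C (Suc t) = filled V E C t \<Longrightarrow> filled V E C (t + k) = filled V E C t"
  by (induction k) (simp_all add: filled_Suc)

lemma sum_ind_card: "finite A \<Longrightarrow> (\<Sum>w\<in>A. if w \<in> S then 1 else 0) = real (card (A \<inter> S))"
proof -
  assume f: "finite A"
  have "(\<Sum>w\<in>A. if w \<in> S then 1 else (0::real)) = (\<Sum>w\<in>A \<inter> S. 1)"
    using sum.inter_restrict[OF f, of "\<lambda>_. (1::real)" S] by simp
  then show ?thesis by simp
qed

theorem theorem4p3:
  fixes V :: "'a set" and E :: "'a \<Rightarrow> 'a \<Rightarrow> bool" and T :: nat and C :: "'a set"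
  assumes "simple_graph V E"
    and "T \<ge> 1"
    and "zero_forcing_set V E C"
    and "prop_time V E C \<le> enat T"
  shows "\<exists>x y z. TSM_feasible V E T x y z \<and>
           real (card C) = (\<Sum>v \<in> V. x v 0) \<and>
           (\<exists>k. prop_time V E C = enat k \<and> (\<Sum>t \<in> {1..T}. z t) = real k \<and> k \<le> T)"
proof -
  have finV: "finite V" and Esym: "\<And>u v. E u v \<Longrightarrow> E v u"
    and EV: "\<And>u v. E u v \<Longrightarrow> u \<in> V \<and> v \<in> V"
    using assms(1) by (auto simp: simple_graph_def)
  have CV: "C \<subseteq> V" using assms(3) by (simp add: zero_forcing_set_def)
  define S where "S = filled V E C"
  define p where "p = (LEAST t. S t = V)"
  have ex: "\<exists>t. S t = V" using assms(3) by (simp add: zero_forcing_set_def S_def)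
  have Sp: "S p = V" unfolding p_def by (rule LeastI_ex[OF ex])
  have pmin: "\<And>t. S t = V \<Longrightarrow> p \<le> t" unfolding p_def by (rule Least_le)
  have ptime: "prop_time V E C = enat p"
    using assms(3) by (simp add: prop_time_def p_def S_def)
  have pT: "p \<le> T" using assms(4) ptime by simp
  have SV: "\<And>t. S t \<subseteq> V" unfolding S_def using filled_sub[OF CV] by blast
  have Smono: "\<And>t t'. t \<le> t' \<Longrightarrow> S t \<subseteq> S t'" unfolding S_def by (rule filled_mono)
  have S0: "S 0 = C" by (simp add: S_def filled_0)
  have Safter: "\<And>t. p \<le> t \<Longrightarrow> S t = V" using Smono SV Sp by blast
  have Sstrict: "\<And>t. t < p \<Longrightarrow> S (Suc t) \<noteq> S t"
  proof
    fix t assume tp: "t < p" and eq: "S (Suc t) = S t"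
    have "S (t + (p - t)) = S t" using eq filled_fix unfolding S_def by blast
    then have "S t = V" using tp Sp by simp
    then show False using pmin tp by fastforce
  qed
  define g where "g t v = (SOME u. u \<in> S (t-1) \<and> E u v \<and> (\<forall>w\<in>nbh V E u - {v}. w \<in> S (t-1)))" for t v
  have gprop: "g t v \<in> S (t-1) \<and> E (g t v) v \<and> (\<forall>w\<in>nbh V E (g t v) - {v}. w \<in> S (t-1))"
    if "t \<ge> 1" "v \<in> S t - S (t-1)" for t v
  proof -
    have "v \<in> S (Suc (t-1)) - S (t-1)" using that by simp
    then have "\<exists>u. u \<in> S (t-1) \<and> E u v \<and> (\<forall>w\<in>nbh V E u - {v}. w \<in> S (t-1))"
      using filled_new[of v V E C "t-1"] unfolding S_def by blast
    then show ?thesis unfolding g_def by (rule someI_ex)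
  qed
  define x :: "'a \<Rightarrow> nat \<Rightarrow> real" where "x v t = (if v \<in> S t then 1 else 0)" for v t
  define y :: "'a \<times> 'a \<Rightarrow> nat \<Rightarrow> real" where
    "y a t = (if snd a \<in> S t - S (t-1) \<and> fst a = g t (snd a) then 1 else 0)" for a t
  define z :: "nat \<Rightarrow> real" where "z t = (if S t \<noteq> S (t-1) then 1 else 0)" for t
  have finIn: "finite {u. (u, v) \<in> arcs V E}" for v
    by (rule finite_subset[OF _ finV]) (auto simp: arcs_def)
  have Ysum: "(\<Sum>u\<in>{u. (u, v) \<in> arcs V E}. y (u, v) t) = (if v \<in> S t - S (t-1) then 1 else 0)"
    if "t \<ge> 1" for t v
  proof (cases "v \<in> S t - S (t-1)")
    case True
    have "(\<Sum>u\<in>{u. (u, v) \<in> arcs V E}. y (u, v) t) = (\<Sum>u\<in>{u. (u, v) \<in> arcs V E}. if u = g t v then 1 else 0)"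
      using True by (intro sum.cong) (auto simp: y_def)
    also have "\<dots> = 1" using gprop[OF that True] EV[of "g t v" v] finIn[of v]
      by (simp add: arcs_def)
    finally show ?thesis using True by simp
  next
    case False
    have "(\<Sum>u\<in>{u. (u, v) \<in> arcs V E}. y (u, v) t) = 0"
      by (rule sum.neutral) (use False in \<open>auto simp: y_def\<close>)
    then show ?thesis using False by simp
  qed
  have finN: "finite (nbh V E u)" for u
    by (rule finite_subset[OF _ finV]) (auto simp: nbh_def)
  have diffsum: "(\<Sum>v\<in>V. x v t - x v (t - 1)) = real (card (S t - S (t-1)))" for t
  proof -
    have "(\<Sum>v\<in>V. x v t - x v (t - 1)) = (\<Sum>v\<in>V. if v \<in> S t - S (t-1) then 1 else 0)"
      using Smono[of "t-1" t] by (intro sum.cong) (auto simp: x_def)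
    also have "\<dots> = real (card (V \<inter> (S t - S (t-1))))" by (rule sum_ind_card[OF finV])
    also have "V \<inter> (S t - S (t-1)) = S t - S (t-1)" using SV by blast
    finally show ?thesis .
  qed
  have zp: "z t = (if t \<in> {1..p} then 1 else 0)" if "t \<in> {1..T}" for t
  proof (cases "t \<le> p")
    case True
    then have "t - 1 < p" using that by auto
    then have "S (Suc (t-1)) \<noteq> S (t-1)" by (rule Sstrict)
    then have "S t \<noteq> S (t-1)" using that by simp
    then show ?thesis using True that by (simp add: z_def)
  next
    case False
    then show ?thesis using Safter[of t] Safter[of "t-1"] by (simp add: z_def)
  qed
  have feas: "TSM_feasible V E T x y z"
    unfolding TSM_feasible_def
  proof (intro conjI)
    show "\<forall>v\<in>V. \<forall>t\<in>{0..T}. x v t \<in> {0, 1}" by (simp add: x_def)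
    show "\<forall>a\<in>arcs V E. \<forall>t\<in>{1..T}. y a t \<in> {0, 1}" by (simp add: y_def)
    show "\<forall>t\<in>{1..T}. z t \<in> {0, 1}" by (simp add: z_def)
    show "\<forall>v\<in>V. x v 0 + (\<Sum>t\<in>{1..T}. \<Sum>u\<in>{u. (u, v) \<in> arcs V E}. y (u, v) t) = 1"
    proof
      fix v assume vV: "v \<in> V"
      have S1: "(\<Sum>t\<in>{1..T}. \<Sum>u\<in>{u. (u, v) \<in> arcs V E}. y (u, v) t)
          = (\<Sum>t\<in>{1..T}. if v \<in> S t - S (t-1) then 1 else 0)"
        using Ysum by (intro sum.cong) auto
      show "x v 0 + (\<Sum>t\<in>{1..T}. \<Sum>u\<in>{u. (u, v) \<in> arcs V E}. y (u, v) t) = 1"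
      proof (cases "v \<in> C")
        case True
        then have "\<And>t. v \<in> S t" unfolding S_def using filled_C[of C V E] True by blast
        then show ?thesis using S1 True by (simp add: x_def S0)
      next
        case False
        define t0 where "t0 = (LEAST t. v \<in> S t)"
        have ex0: "\<exists>t. v \<in> S t" using Sp vV by blast
        have t0in: "v \<in> S t0" unfolding t0_def by (rule LeastI_ex[OF ex0])
        have t0le: "\<And>t. v \<in> S t \<Longrightarrow> t0 \<le> t" unfolding t0_def by (rule Least_le)
        have t0p: "t0 \<le> p" using t0le Sp vV by blast
        have t0pos: "t0 \<ge> 1" using t0in False S0 by (cases t0) auto
        have t0prev: "v \<notin> S (t0 - 1)" using t0le t0pos by fastforce
        have iff: "(v \<in> S t - S (t-1)) \<longleftrightarrow> t = t0" if "t \<in> {1..T}" for t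
        proof
          assume a: "v \<in> S t - S (t-1)"
          then have "t0 \<le> t" using t0le by blast
          moreover have "\<not> t0 < t"
          proof
            assume "t0 < t"
            then have "S t0 \<subseteq> S (t-1)" using Smono by simp
            then show False using a t0in by blast
          qed
          ultimately show "t = t0" by simp
        next
          assume "t = t0"
          then show "v \<in> S t - S (t-1)" using t0in t0prev by simp
        qed
        have "(\<Sum>t\<in>{1..T}. if v \<in> S t - S (t-1) then 1 else (0::real))
            = (\<Sum>t\<in>{1..T}. if t = t0 then 1 else 0)"
          using iff by (intro sum.cong) auto
        also have "\<dots> = 1" using t0pos t0p pT by simp
        finally show ?thesis using S1 False S0 by (simp add: x_def)
      qed
    qed
    show "\<forall>(u, v)\<in>arcs V E. \<forall>t\<in>{1..T}. y (u, v) t \<le> x u (t - 1)"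
    proof (clarify)
      fix u v t assume "(u, v) \<in> arcs V E" "t \<in> {1..T}"
      show "y (u, v) t \<le> x u (t - 1)"
      proof (cases "v \<in> S t - S (t-1) \<and> u = g t v")
        case True
        then have "u \<in> S (t-1)" using gprop[of t v] \<open>t \<in> {1..T}\<close> by simp
        then show ?thesis by (simp add: x_def y_def)
      next
        case False
        have "y (u, v) t = 0" unfolding y_def fst_conv snd_conv using False by (rule if_not_P)
        then show ?thesis by (simp add: x_def)
      qed
    qed
    show "\<forall>(u, v)\<in>arcs V E. \<forall>w\<in>nbh V E u - {v}. \<forall>t\<in>{1..T}. y (u, v) t \<le> x w (t - 1)"
    proof (clarify)
      fix u v w t assume "(u, v) \<in> arcs V E" "w \<in> nbh V E u" "w \<noteq> v" "t \<in> {1..T}"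
      show "y (u, v) t \<le> x w (t - 1)"
      proof (cases "v \<in> S t - S (t-1) \<and> u = g t v")
        case True
        then have "w \<in> S (t-1)" using gprop[of t v] \<open>t \<in> {1..T}\<close> \<open>w \<in> nbh V E u\<close> \<open>w \<noteq> v\<close> by auto
        then show ?thesis by (simp add: x_def y_def)
      next
        case False
        have "y (u, v) t = 0" unfolding y_def fst_conv snd_conv using False by (rule if_not_P)
        then show ?thesis by (simp add: x_def)
      qed
    qed
    show "\<forall>v\<in>V. \<forall>t\<in>{1..T}. x v t = x v (t - 1) + (\<Sum>u\<in>{u. (u, v) \<in> arcs V E}. y (u, v) t)"
    proof (intro ballI)
      fix v t assume "v \<in> V" "t \<in> {1..T}"
      then show "x v t = x v (t - 1) + (\<Sum>u\<in>{u. (u, v) \<in> arcs V E}. y (u, v) t)"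
        using Ysum[of t v] Smono[of "t-1" t] by (auto simp: x_def)
    qed
    show "\<forall>(u, v)\<in>arcs V E. \<forall>t\<in>{1..T}.
        x u (t - 1) - x v (t - 1) + (\<Sum>w\<in>nbh V E u - {v}. x w (t - 1))
          \<le> (\<Sum>w\<in>{w. (w, v) \<in> arcs V E}. y (w, v) t) + real (deg V E u) - 1"
    proof (clarify)
      fix u v t assume uv: "(u, v) \<in> arcs V E" and t: "t \<in> {1..T}"
      let ?A = "nbh V E u - {v}"
      have vN: "v \<in> nbh V E u" using uv by (simp add: arcs_def nbh_def)
      have cardA: "card ?A = deg V E u - 1" using vN finN by (simp add: deg_def)
      have degpos: "deg V E u \<ge> 1" using vN finN[of u] unfolding deg_def
        by (metis One_nat_def Suc_leI card_gt_0_iff empty_iff)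
      have finA: "finite ?A" using finN by simp
      have sA: "(\<Sum>w\<in>?A. x w (t - 1)) = real (card (?A \<inter> S (t-1)))"
        unfolding x_def by (rule sum_ind_card[OF finA])
      have le1: "card (?A \<inter> S (t-1)) \<le> card ?A" using finA by (intro card_mono) auto
      have Ynn: "0 \<le> (\<Sum>w\<in>{w. (w, v) \<in> arcs V E}. y (w, v) t)"
        using Ysum[of t v] t by simp
      show "x u (t - 1) - x v (t - 1) + (\<Sum>w\<in>?A. x w (t - 1))
          \<le> (\<Sum>w\<in>{w. (w, v) \<in> arcs V E}. y (w, v) t) + real (deg V E u) - 1"
      proof (cases "u \<in> S (t-1) \<and> v \<notin> S (t-1) \<and> ?A \<subseteq> S (t-1)")
        case True
        have "v \<in> S (Suc (t-1))"
          using True uv unfolding S_def by (auto simp: filled_Suc force_step_def arcs_def)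
        then have "v \<in> S t - S (t-1)" using True t by simp
        then have "(\<Sum>w\<in>{w. (w, v) \<in> arcs V E}. y (w, v) t) = 1" using Ysum[of t v] t by simp
        moreover have "?A \<inter> S (t-1) = ?A" using True by blast
        ultimately show ?thesis using True sA cardA degpos by (simp add: x_def of_nat_diff)
      next
        case False
        show ?thesis
        proof (cases "?A \<subseteq> S (t-1)")
          case True
          then have "?A \<inter> S (t-1) = ?A" by blast
          then show ?thesis using False True sA cardA degpos Ynn
            by (auto simp: x_def of_nat_diff)
        next
          case nA: False
          have "?A \<inter> S (t-1) \<subset> ?A" using nA by blast
          then have "card (?A \<inter> S (t-1)) < card ?A" using finA by (rule psubset_card_mono[rotated])
          then have "real (card (?A \<inter> S (t-1))) \<le> real (deg V E u) - 2"
            using cardA degpos by linarith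
          moreover have "x u (t-1) - x v (t-1) \<le> 1" by (simp add: x_def)
          ultimately show ?thesis using sA Ynn by linarith
        qed
      qed
    qed
    show "\<forall>t\<in>{1..T}. 1 / real (card V) * (\<Sum>v\<in>V. x v t - x v (t - 1)) - z t \<le> 0"
    proof
      fix t assume t: "t \<in> {1..T}"
      have cle: "card (S t - S (t-1)) \<le> card V" using SV finV by (meson Diff_subset card_mono subset_trans)
      show "1 / real (card V) * (\<Sum>v\<in>V. x v t - x v (t - 1)) - z t \<le> 0"
      proof (cases "S t = S (t-1)")
        case True then show ?thesis using diffsum[of t] by (simp add: z_def)
      next
        case False
        have "real (card (S t - S (t-1))) / real (card V) \<le> 1"
          using cle by (cases "card V = 0") auto
        then show ?thesis using False diffsum[of t] by (simp add: z_def)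
      qed
    qed
    show "\<forall>t\<in>{1..T}. z t - (\<Sum>v\<in>V. x v t - x v (t - 1)) \<le> 0"
    proof
      fix t assume t: "t \<in> {1..T}"
      show "z t - (\<Sum>v\<in>V. x v t - x v (t - 1)) \<le> 0"
      proof (cases "S t = S (t-1)")
        case True then show ?thesis using diffsum[of t] by (simp add: z_def)
      next
        case False
        then have "S t - S (t-1) \<noteq> {}" using Smono[of "t-1" t] by auto
        moreover have "finite (S t - S (t-1))" using SV finV by (meson Diff_subset finite_subset)
        ultimately have "card (S t - S (t-1)) \<ge> 1" by (simp add: Suc_leI card_gt_0_iff)
        then show ?thesis using False diffsum[of t] by (simp add: z_def)
      qed
    qed
  qed
  have cardC: "real (card C) = (\<Sum>v \<in> V. x v 0)"
  proof -
    have "(\<Sum>v \<in> V. x v 0) = real (card (V \<inter> S 0))" unfolding x_def by (rule sum_ind_card[OF finV])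
    then show ?thesis using CV S0 by (simp add: Int_absorb1)
  qed
  have zsum: "(\<Sum>t \<in> {1..T}. z t) = real p"
  proof -
    have "(\<Sum>t \<in> {1..T}. z t) = (\<Sum>t \<in> {1..T}. if t \<in> {1..p} then 1 else 0)"
      using zp by (intro sum.cong) auto
    also have "\<dots> = real (card ({1..T} \<inter> {1..p}))" by (rule sum_ind_card) simp
    also have "{1..T} \<inter> {1..p} = {1..p}" using pT by auto
    finally show ?thesis by simp
  qed
  show ?thesis using feas cardC zsum ptime pT by blast
qed

end
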